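(* Let $\mathcal{S}$ be an $F$-weighted boundary stratum of genus $g$ whose weights contain exactly $n$ distinct weights up to sign, $r_1,\dots,r_n$. Then $r_1\otimes r_1,\dots,r_n\otimes r_n$ are linearly independent over $\mathbb{Q}$ in $\mathrm{Sym}_{\mathbb{Q}}(F)$. Equivalently, $N(\mathcal{S})$ (as a $\mathbb{Q}$-vector space) and the torus $A_\mathcal{S}$ have dimension $g(g+1)/2-n$.
   Context: $F$ is a totally real number field of degree $g$ with trace pairing $\langle x,y\rangle=\mathrm{Tr}_{F/\mathbb{Q}}(xy)$. For a lattice $\mathcal{I}\subset F$ (additive subgroup of rank $g$), $\mathcal{I}^\vee=\{x\in F:\langle x,y\rangle\in\mathbb{Z}\ \forall y\in\mathcal{I}\}$. An $\mathcal{I}$-weighted stable curve is a stable curve of arithmetic genus $g$ and geometric genus $0$ with an element of $\mathcal{I}$ attached to each branch at each node, such that the two branches at a node have opposite weights, the weights on each component sum to zero, and the weights span $\mathcal{I}$; "$F$-weighted" means $\mathcal{I}$-weighted for some lattice $\mathcal{I}$. An $F$-weighted boundary stratum $\mathcal{S}$ is the moduli space of weighted stable curves topologically equivalent (weight-preservingly) to a fixed one; its weights are those of its nodes. $\mathrm{Sym}_{\mathbb{Q}}(F)\subset F\otimes_{\mathbb{Q}}F$ is the subspace of symmetric tensors, $\mathbf{S}_{\mathbb{Q}}(F)$ is the quotient of $F\otimes_{\mathbb{Q}}F$ by the span of $x\otimes y-y\otimes x$, and they are dual via $\langle a\otimes b,c\otimes d\rangle=\langle a,c\rangle\langle b,d\rangle$;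 $\mathbf{S}_{\mathbb{Z}}(\mathcal{I}^\vee)$ is the analogous quotient of $\mathcal{I}^\vee\otimes_{\mathbb{Z}}\mathcal{I}^\vee$. $W(\mathcal{S})\subset\mathrm{Sym}_{\mathbb{Q}}(F)$ is the span of $r\otimes r$ over the weights $r$ of $\mathcal{S}$, $N(\mathcal{S})\subset\mathbf{S}_{\mathbb{Q}}(F)$ its annihilator, and $A_\mathcal{S}=\mathrm{Hom}_{\mathbb{Z}}(N(\mathcal{S})\cap\mathbf{S}_{\mathbb{Z}}(\mathcal{I}^\vee),\mathbb{G}_m)$ the ambient algebraic torus. *)

theory Defs
  imports Complex_Main
begin

definition subfield_C :: "complex set \<Rightarrow> bool" where
  "subfield_C F \<longleftrightarrow> 0 \<in> F \<and> 1 \<in> F \<and>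
     (\<forall>x\<in>F. \<forall>y\<in>F. x + y \<in> F \<and> x * y \<in> F) \<and>
     (\<forall>x\<in>F. - x \<in> F) \<and> (\<forall>x\<in>F. x \<noteq> 0 \<longrightarrow> inverse x \<in> F)"

definition Q_indep :: "(nat \<Rightarrow> complex) \<Rightarrow> nat \<Rightarrow> bool" where
  "Q_indep b g \<longleftrightarrow>
     (\<forall>q :: nat \<Rightarrow> rat. (\<Sum>i<g. of_rat (q i) * b i) = 0 \<longrightarrow> (\<forall>i<g. q i = 0))"

definition Q_span :: "(nat \<Rightarrow> complex) \<Rightarrow> nat \<Rightarrow> complex set" where
  "Q_span b g = {(\<Sum>i<g. of_rat (q i) * b i) | q :: nat \<Rightarrow> rat. True}"

definition Z_span :: "(nat \<Rightarrow> complex) \<Rightarrow> nat \<Rightarrow> complex set" where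
  "Z_span b g = {(\<Sum>i<g. of_int (k i) * b i) | k :: nat \<Rightarrow> int. True}"

definition number_field_of_degree :: "complex set \<Rightarrow> nat \<Rightarrow> bool" where
  "number_field_of_degree F g \<longleftrightarrow> subfield_C F \<and>
     (\<exists>b. (\<forall>i<g. b i \<in> F) \<and> Q_indep b g \<and> Q_span b g = F)"

definition field_emb :: "complex set \<Rightarrow> (complex \<Rightarrow> complex) \<Rightarrow> bool" where
  "field_emb F \<sigma> \<longleftrightarrow> \<sigma> 1 = 1 \<and>
     (\<forall>x\<in>F. \<forall>y\<in>F. \<sigma> (x + y) = \<sigma> x + \<sigma> y \<and> \<sigma> (x * y) = \<sigma> x * \<sigma> y)"

definition totally_real :: "complex set \<Rightarrow> bool" where
  "totally_real F \<longleftrightarrow> (\<forall>\<sigma>. field_emb F \<sigma> \<longrightarrow> (\<forall>x\<in>F. \<sigma> x \<in> \<real>))"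

definition is_lattice :: "complex set \<Rightarrow> nat \<Rightarrow> complex set \<Rightarrow> bool" where
  "is_lattice F g I \<longleftrightarrow> (\<exists>b. (\<forall>i<g. b i \<in> F) \<and> Q_indep b g \<and> I = Z_span b g)"

text \<open>Combinatorial (dual graph) data of the curve: V = irreducible components
  (all rational), H = branches at nodes, \<iota> swaps the two branches of a node,
  vt h = component carrying branch h, w h = weight attached to branch h.
  Stability: every component (P^1, no marked points) has at least 3 special points.
  Arithmetic genus: #nodes - #components + 1 = g, i.e. card H + 2 = 2 g + 2 card V.\<close>
definition weighted_stable_curve ::
  "nat \<Rightarrow> complex set \<Rightarrow> 'v set \<Rightarrow> 'h set \<Rightarrow> ('h \<Rightarrow> 'h) \<Rightarrow> ('h \<Rightarrow> 'v)
     \<Rightarrow> ('h \<Rightarrow> complex) \<Rightarrow> bool" where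
  "weighted_stable_curve g I V H \<iota> vt w \<longleftrightarrow>
     finite V \<and> finite H \<and> V \<noteq> {} \<and>
     (\<forall>h\<in>H. \<iota> h \<in> H \<and> \<iota> h \<noteq> h \<and> \<iota> (\<iota> h) = h) \<and>
     (\<forall>h\<in>H. vt h \<in> V) \<and>
     (\<forall>x\<in>V. card {h\<in>H. vt h = x} \<ge> 3) \<and>
     (\<forall>x\<in>V. \<forall>y\<in>V. (x, y) \<in> {(vt h, vt (\<iota> h)) | h. h \<in> H}\<^sup>*) \<and>
     card H + 2 = 2 * g + 2 * card V \<and>
     (\<forall>h\<in>H. w h \<in> I) \<and>
     (\<forall>h\<in>H. w (\<iota> h) = - w h) \<and>
     (\<forall>x\<in>V. (\<Sum>h\<in>{h\<in>H. vt h = x}. w h) = 0) \<and>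
     {(\<Sum>h\<in>H. of_int (k h) * w h) | k :: 'h \<Rightarrow> int. True} = I"

definition Q_linear_functional :: "complex set \<Rightarrow> (complex \<Rightarrow> rat) \<Rightarrow> bool" where
  "Q_linear_functional F \<phi> \<longleftrightarrow>
     (\<forall>x\<in>F. \<forall>y\<in>F. \<phi> (x + y) = \<phi> x + \<phi> y) \<and>
     (\<forall>q x. x \<in> F \<longrightarrow> \<phi> (of_rat q * x) = q * \<phi> x)"

text \<open>F \<otimes>_Q F realised canonically (F finite-dimensional) as Q-bilinear forms on
  F^* \<times> F^*: the pure tensor a \<otimes> b is (\<phi>, \<psi>) \<mapsto> \<phi> a * \<psi> b.\<close>
definition Q_tensor :: "complex set \<Rightarrow> complex \<Rightarrow> complex
     \<Rightarrow> ((complex \<Rightarrow> rat) \<times> (complex \<Rightarrow> rat)) \<Rightarrow> rat" where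
  "Q_tensor F a b = (\<lambda>(\<phi>, \<psi>).
     if Q_linear_functional F \<phi> \<and> Q_linear_functional F \<psi> then \<phi> a * \<psi> b else 0)"

definition Q_lin_indep :: "(nat \<Rightarrow> 'a \<Rightarrow> rat) \<Rightarrow> nat \<Rightarrow> bool" where
  "Q_lin_indep f n \<longleftrightarrow>
     (\<forall>c :: nat \<Rightarrow> rat. (\<lambda>p. \<Sum>i<n. c i * f i p) = (\<lambda>p. 0) \<longrightarrow> (\<forall>i<n. c i = 0))"

end

theory Submission
  imports Defs "HOL-Library.Function_Algebras"
begin

definition div_at :: "'h set \<Rightarrow> ('h \<Rightarrow> 'v) \<Rightarrow> ('h \<Rightarrow> 'a::comm_monoid_add) \<Rightarrow> 'v \<Rightarrow> 'a" where
  "div_at H vt f x = (\<Sum>h\<in>{h\<in>H. vt h = x}. f h)"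

definition circ :: "'h set \<Rightarrow> ('h \<Rightarrow> 'h) \<Rightarrow> ('h \<Rightarrow> 'v) \<Rightarrow> ('h \<Rightarrow> 'a::ab_group_add) \<Rightarrow> bool" where
  "circ H \<iota> vt f \<longleftrightarrow> (\<forall>h\<in>H. f (\<iota> h) = - f h) \<and> (\<forall>x. div_at H vt f x = 0)"

definition Eg :: "('h \<Rightarrow> 'h) \<Rightarrow> ('h \<Rightarrow> 'v) \<Rightarrow> 'h set \<Rightarrow> ('v \<times> 'v) set" where
  "Eg \<iota> vt A = {(vt h, vt (\<iota> h)) | h. h \<in> A}"

definition invol :: "'h set \<Rightarrow> ('h \<Rightarrow> 'h) \<Rightarrow> bool" where
  "invol H \<iota> \<longleftrightarrow> (\<forall>h\<in>H. \<iota> h \<in> H \<and> \<iota> h \<noteq> h \<and> \<iota> (\<iota> h) = h)"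

lemma half_zero:
  fixes s :: "'a::field_char_0"
  assumes "s = - s" shows "s = 0"
proof -
  have h: "s + s = 0" using assms by (metis add.right_inverse)
  have "2 * s = 0" by (simp only: mult_2 h)
  then show ?thesis by simp
qed

lemma cut_zero:
  fixes f :: "'h \<Rightarrow> 'a::field_char_0"
  assumes fin: "finite H" and inv: "invol H \<iota>" and c: "circ H \<iota> vt f"
  shows "(\<Sum>h\<in>{h\<in>H. vt h \<in> X \<and> vt (\<iota> h) \<notin> X}. f h) = 0"
proof -
  let ?S = "{h\<in>H. vt h \<in> X}"
  have A: "(\<Sum>h\<in>?S. f h) = 0"
  proof -
    have "(\<Sum>h\<in>?S. f h) = (\<Sum>y\<in>vt ` ?S. \<Sum>h\<in>{h. h \<in> ?S \<and> vt h = y}. f h)"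
      by (rule sum.group[symmetric]) (use fin in auto)
    also have "\<dots> = (\<Sum>y\<in>vt ` ?S. 0)"
    proof (rule sum.cong[OF refl])
      fix y assume "y \<in> vt ` ?S"
      then have "y \<in> X" by auto
      then have "{h. h \<in> ?S \<and> vt h = y} = {h\<in>H. vt h = y}" by auto
      then show "(\<Sum>h\<in>{h. h \<in> ?S \<and> vt h = y}. f h) = 0"
        using c unfolding circ_def div_at_def by simp
    qed
    finally show ?thesis by simp
  qed
  let ?I = "{h\<in>H. vt h \<in> X \<and> vt (\<iota> h) \<in> X}"
  have B: "(\<Sum>h\<in>?I. f h) = 0"
  proof -
    have im: "\<iota> ` ?I = ?I"
    proof
      show "\<iota> ` ?I \<subseteq> ?I" using inv unfolding invol_def by auto
      show "?I \<subseteq> \<iota> ` ?I"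
      proof
        fix h assume h: "h \<in> ?I"
        then have "\<iota> h \<in> ?I" using inv unfolding invol_def by auto
        moreover have "h = \<iota> (\<iota> h)" using h inv unfolding invol_def by auto
        ultimately show "h \<in> \<iota> ` ?I" by blast
      qed
    qed
    have inj: "inj_on \<iota> ?I"
      by (rule inj_onI) (metis (no_types, lifting) inv invol_def mem_Collect_eq)
    have "(\<Sum>h\<in>?I. f h) = (\<Sum>h\<in>\<iota> ` ?I. f h)" using im by simp
    also have "\<dots> = (\<Sum>h\<in>?I. f (\<iota> h))" by (rule sum.reindex[OF inj, unfolded comp_def])
    also have "\<dots> = (\<Sum>h\<in>?I. - f h)"
      by (rule sum.cong) (use c in \<open>auto simp: circ_def\<close>)
    also have "\<dots> = - (\<Sum>h\<in>?I. f h)" by (simp add: sum_negf)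
    finally show ?thesis by (rule half_zero)
  qed
  have split: "?S = ?I \<union> {h\<in>H. vt h \<in> X \<and> vt (\<iota> h) \<notin> X}" by auto
  have "(\<Sum>h\<in>?S. f h) = (\<Sum>h\<in>?I. f h) + (\<Sum>h\<in>{h\<in>H. vt h \<in> X \<and> vt (\<iota> h) \<notin> X}. f h)"
    unfolding split by (rule sum.union_disjoint) (use fin in auto)
  then show ?thesis using A B by simp
qed

lemma escape:
  assumes "(x, y) \<in> (Eg \<iota> vt A)\<^sup>*" "x \<in> X" "y \<notin> X"
  shows "\<exists>h\<in>A. vt h \<in> X \<and> vt (\<iota> h) \<notin> X"
  using assms
proof (induction rule: rtrancl_induct)
  case base then show ?case by simp
next
  case (step y z)
  then obtain h where "h \<in> A" "y = vt h" "z = vt (\<iota> h)" unfolding Eg_def by auto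
  then show ?case using step by (cases "y \<in> X") auto
qed

lemma reach_closed:
  assumes "h \<in> A" "(u, vt h) \<in> (Eg \<iota> vt A)\<^sup>*"
  shows "(u, vt (\<iota> h)) \<in> (Eg \<iota> vt A)\<^sup>*"
proof -
  have "(vt h, vt (\<iota> h)) \<in> Eg \<iota> vt A" using assms unfolding Eg_def by auto
  then show ?thesis using assms by (meson rtrancl.rtrancl_into_rtrancl)
qed

lemma div_add: "finite H \<Longrightarrow> div_at H vt (\<lambda>h. f h + g h) x = div_at H vt f x + div_at H vt g x"
  unfolding div_at_def by (simp add: sum.distrib)

lemma div_diff: "div_at H vt (\<lambda>h. (f h :: 'a::ab_group_add) - g h) x = div_at H vt f x - div_at H vt g x"
  unfolding div_at_def by (simp add: sum_subtractf)


lemma least_path_inj: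
  assumes reach: "(u, v) \<in> R\<^sup>*"
  obtains m f where "f 0 = u" "f m = v" "\<forall>i<m. (f i, f (Suc i)) \<in> R"
    "\<forall>i j. i \<le> m \<longrightarrow> j \<le> m \<longrightarrow> f i = f j \<longrightarrow> i = j"
proof -
  obtain n where "(u, v) \<in> R ^^ n" using reach rtrancl_power by blast
  define m where "m = (LEAST n. (u, v) \<in> R ^^ n)"
  have mR: "(u, v) \<in> R ^^ m" unfolding m_def by (rule LeastI) fact
  have mmin: "\<And>k. (u, v) \<in> R ^^ k \<Longrightarrow> m \<le> k" unfolding m_def by (rule Least_le)
  obtain f where f0: "f 0 = u" and fm: "f m = v" and st: "\<forall>i<m. (f i, f (Suc i)) \<in> R"
    using mR relpow_fun_conv by metis
  have inj: "\<forall>i j. i \<le> m \<longrightarrow> j \<le> m \<longrightarrow> f i = f j \<longrightarrow> i = j"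
  proof (rule ccontr)
    assume "\<not> ?thesis"
    then obtain i j where ij: "i \<le> m" "j \<le> m" "f i = f j" "i \<noteq> j" by blast
    then obtain i j where ij: "i < j" "j \<le> m" "f i = f j"
      by (metis linorder_neqE_nat)
    define d where "d = j - i"
    define f' where "f' k = (if k \<le> i then f k else f (k + d))" for k
    have "(u, v) \<in> R ^^ (m - d)"
      unfolding relpow_fun_conv
    proof (intro exI conjI allI impI)
      show "f' 0 = u" using f0 by (simp add: f'_def)
      show "f' (m - d) = v"
      proof (cases "m - d \<le> i")
        case True
        then have "j = m" using ij d_def by linarith
        then show ?thesis using True ij fm d_def by (simp add: f'_def)
      next
        case False
        then show ?thesis using ij fm d_def by (simp add: f'_def)
      qed
      fix k assume k: "k < m - d"
      show "(f' k, f' (Suc k)) \<in> R"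
      proof (cases "k < i")
        case True
        then show ?thesis using st ij k by (simp add: f'_def)
      next
        case False
        show ?thesis
        proof (cases "k = i")
          case True
          have "Suc j = Suc i + d" using ij d_def by simp
          moreover have "j < m" using k True ij d_def by linarith
          ultimately show ?thesis using st ij True by (auto simp: f'_def)
        next
          case False2: False
          then have "k > i" using False by simp
          moreover have "k + d < m" using k ij d_def by linarith
          ultimately show ?thesis using st by (auto simp: f'_def)
        qed
      qed
    qed
    then have "m \<le> m - d" by (rule mmin)
    moreover have "d > 0" "d \<le> m" using ij d_def by auto
    ultimately show False by linarith
  qed
  show ?thesis using that f0 fm st inj by blast
qed

lemma sum_indicator_card:
  "finite S \<Longrightarrow> (\<Sum>h\<in>S. (if P h then 1 else 0 :: rat)) = of_nat (card {h\<in>S. P h})"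
proof -
  assume "finite S"
  have "{h\<in>S. P h} = S \<inter> Collect P" by auto
  then show ?thesis using \<open>finite S\<close> by (simp add: sum.If_cases)
qed

lemma path_flow:
  fixes \<iota> :: "'h \<Rightarrow> 'h" and vt :: "'h \<Rightarrow> 'v"
  assumes fin: "finite H" and inv: "invol H \<iota>" and AH: "A \<subseteq> H"
    and reach: "(u, v) \<in> (Eg \<iota> vt A)\<^sup>*" and uv: "u \<noteq> v"
  shows "\<exists>p::'h \<Rightarrow> rat. (\<forall>h\<in>H. p (\<iota> h) = - p h) \<and> (\<forall>h\<in>H. p h = 1 \<or> p h = 0 \<or> p h = -1)
     \<and> (\<forall>h\<in>H. p h = 1 \<longrightarrow> h \<in> A) \<and> (\<forall>h\<in>H. p h = -1 \<longrightarrow> \<iota> h \<in> A)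
     \<and> (\<forall>x. div_at H vt p x = (if x = u then 1 else if x = v then -1 else 0))"
proof -
  obtain m f where f0: "f 0 = u" and fm: "f m = v" and st: "\<forall>i<m. (f i, f (Suc i)) \<in> Eg \<iota> vt A"
    and inj: "\<forall>i j. i \<le> m \<longrightarrow> j \<le> m \<longrightarrow> f i = f j \<longrightarrow> i = j"
    using least_path_inj[OF reach] by blast
  have m0: "m > 0" using f0 fm uv by (cases m) auto
  define hs where "hs i = (SOME h. h \<in> A \<and> vt h = f i \<and> vt (\<iota> h) = f (Suc i))" for i
  have hs: "hs i \<in> A \<and> vt (hs i) = f i \<and> vt (\<iota> (hs i)) = f (Suc i)" if "i < m" for i
  proof -
    have "\<exists>h. h \<in> A \<and> vt h = f i \<and> vt (\<iota> h) = f (Suc i)"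
      using st that unfolding Eg_def by fastforce
    then show ?thesis unfolding hs_def by (rule someI_ex)
  qed
  define P where "P = hs ` {..<m}"
  have PA: "P \<subseteq> A" using hs unfolding P_def by auto
  have PH: "P \<subseteq> H" using PA AH by auto
  have invH: "\<And>h. h \<in> H \<Longrightarrow> \<iota> h \<in> H \<and> \<iota> h \<noteq> h \<and> \<iota> (\<iota> h) = h"
    using inv unfolding invol_def by blast
  have dis: "\<iota> h \<notin> P" if hP: "h \<in> P" for h
  proof
    assume "\<iota> h \<in> P"
    obtain i where i: "i < m" "h = hs i" using hP P_def by auto
    obtain j where j: "j < m" "\<iota> h = hs j" using \<open>\<iota> h \<in> P\<close> P_def by auto
    have hH: "h \<in> H" using hP PH by auto
    have "f j = f (Suc i)" using hs[OF j(1)] hs[OF i(1)] i j by metis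
    then have 1: "j = Suc i" using inj i j by simp
    have "vt (\<iota> (hs j)) = vt h" using j invH[OF hH] by simp
    then have "f (Suc j) = f i" using hs[OF j(1)] hs[OF i(1)] i by simp
    then have "Suc j = i" using inj i j by simp
    with 1 show False by simp
  qed
  define p where "p h = (if h \<in> P then 1 else if \<iota> h \<in> P then -1 else (0::rat))" for h
  have anti: "\<forall>h\<in>H. p (\<iota> h) = - p h"
  proof
    fix h assume hH: "h \<in> H"
    show "p (\<iota> h) = - p h"
    proof (cases "\<iota> h \<in> P")
      case True
      then have "h \<notin> P" using dis[OF True] invH[OF hH] by simp
      then show ?thesis using True by (simp add: p_def)
    next
      case False
      then show ?thesis using invH[OF hH] by (simp add: p_def)
    qed
  qed
  have vals: "\<forall>h\<in>H. p h = 1 \<or> p h = 0 \<or> p h = -1" by (simp add: p_def)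
  have pos: "\<forall>h\<in>H. p h = 1 \<longrightarrow> h \<in> A" using PA by (auto simp: p_def split: if_splits)
  have neg: "\<forall>h\<in>H. p h = -1 \<longrightarrow> \<iota> h \<in> A" using PA by (auto simp: p_def split: if_splits)
  have injhs: "inj_on hs {..<m}"
  proof (rule inj_onI)
    fix i j assume "i \<in> {..<m}" "j \<in> {..<m}" "hs i = hs j"
    then have "f i = f j" using hs by (metis lessThan_iff)
    then show "i = j" using inj \<open>i \<in> {..<m}\<close> \<open>j \<in> {..<m}\<close> by auto
  qed
  have divp: "div_at H vt p x = (if x = u then 1 else if x = v then -1 else 0)" for x
  proof -
    let ?S = "{h\<in>H. vt h = x}"
    have finS: "finite ?S" using fin by simp
    have "div_at H vt p x = (\<Sum>h\<in>?S. (if h \<in> P then 1 else 0) - (if \<iota> h \<in> P then 1 else 0))"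
      unfolding div_at_def
    proof (rule sum.cong[OF refl])
      fix h assume "h \<in> ?S"
      show "p h = (if h \<in> P then 1 else 0) - (if \<iota> h \<in> P then 1 else 0)"
        using dis[of h] by (auto simp: p_def)
    qed
    also have "\<dots> = of_nat (card {h\<in>?S. h \<in> P}) - of_nat (card {h\<in>?S. \<iota> h \<in> P})"
      by (simp add: sum_subtractf sum_indicator_card[OF finS])
    finally have D: "div_at H vt p x = of_nat (card {h\<in>?S. h \<in> P}) - of_nat (card {h\<in>?S. \<iota> h \<in> P})" .
    define K where "K = {k. k \<le> m \<and> f k = x}"
    have c1: "card {h\<in>?S. h \<in> P} = card (K - {m})"
    proof -
      have "{h\<in>?S. h \<in> P} = hs ` (K - {m})"
      proof
        show "{h\<in>?S. h \<in> P} \<subseteq> hs ` (K - {m})"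
        proof
          fix h assume h: "h \<in> {h\<in>?S. h \<in> P}"
          then obtain i where i: "i < m" "h = hs i" using P_def by auto
          then have "f i = x" using h hs by auto
          then show "h \<in> hs ` (K - {m})" using i K_def by auto
        qed
        show "hs ` (K - {m}) \<subseteq> {h\<in>?S. h \<in> P}"
        proof
          fix h assume "h \<in> hs ` (K - {m})"
          then obtain i where i: "i \<le> m" "i \<noteq> m" "f i = x" "h = hs i" using K_def by auto
          then have "i < m" by simp
          then show "h \<in> {h\<in>?S. h \<in> P}" using hs[of i] i PH P_def by auto
        qed
      qed
      moreover have "inj_on hs (K - {m})"
        by (rule inj_on_subset[OF injhs]) (auto simp: K_def)
      ultimately show ?thesis by (simp add: card_image)
    qed
    have c2: "card {h\<in>?S. \<iota> h \<in> P} = card (K - {0})"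
    proof -
      have "{h\<in>?S. \<iota> h \<in> P} = (\<lambda>k. \<iota> (hs (k - 1))) ` (K - {0})"
      proof
        show "{h\<in>?S. \<iota> h \<in> P} \<subseteq> (\<lambda>k. \<iota> (hs (k - 1))) ` (K - {0})"
        proof
          fix h assume h: "h \<in> {h\<in>?S. \<iota> h \<in> P}"
          then obtain i where i: "i < m" "\<iota> h = hs i" using P_def by auto
          have hH: "h \<in> H" using h by auto
          have "h = \<iota> (hs i)" using i invH[OF hH] by metis
          then have "f (Suc i) = x" using h hs[OF i(1)] by auto
          then have "Suc i \<in> K - {0}" using i K_def by auto
          then show "h \<in> (\<lambda>k. \<iota> (hs (k - 1))) ` (K - {0})"
            using \<open>h = \<iota> (hs i)\<close> by (metis diff_Suc_1 image_eqI)
        qed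
        show "(\<lambda>k. \<iota> (hs (k - 1))) ` (K - {0}) \<subseteq> {h\<in>?S. \<iota> h \<in> P}"
        proof
          fix h assume "h \<in> (\<lambda>k. \<iota> (hs (k - 1))) ` (K - {0})"
          then obtain k where k: "k \<le> m" "k \<noteq> 0" "f k = x" "h = \<iota> (hs (k - 1))" using K_def by auto
          have km: "k - 1 < m" "Suc (k - 1) = k" using k by auto
          have hsH: "hs (k - 1) \<in> H" using hs[OF km(1)] AH by auto
          have "\<iota> h = hs (k - 1)" using k(4) invH[OF hsH] by simp
          moreover have "h \<in> H" using k(4) invH[OF hsH] by simp
          moreover have "vt h = x" using k hs[OF km(1)] km by simp
          ultimately show "h \<in> {h\<in>?S. \<iota> h \<in> P}" using km P_def by auto
        qed
      qed
      moreover have "inj_on (\<lambda>k. \<iota> (hs (k - 1))) (K - {0})"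
      proof (rule inj_onI)
        fix a b assume a: "a \<in> K - {0}" and b: "b \<in> K - {0}" and e: "\<iota> (hs (a - 1)) = \<iota> (hs (b - 1))"
        have am: "a - 1 < m" and bm: "b - 1 < m" using a b K_def by auto
        have "hs (a - 1) \<in> H" "hs (b - 1) \<in> H" using hs am bm AH by auto
        then have "hs (a - 1) = hs (b - 1)" using e invH by metis
        then have "a - 1 = b - 1" using injhs am bm by (auto dest: inj_onD)
        then show "a = b" using a b by auto
      qed
      ultimately show ?thesis by (simp add: card_image)
    qed
    show ?thesis
    proof (cases "x = u")
      case True
      have "K = {0}" using True f0 inj K_def by auto
      then show ?thesis using D c1 c2 m0 True by simp
    next
      case xu: False
      show ?thesis
      proof (cases "x = v")
        case True
        have "K = {m}" using True fm inj K_def by auto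
        then show ?thesis using D c1 c2 m0 True xu by simp
      next
        case False
        have "0 \<notin> K" "m \<notin> K" using xu False f0 fm K_def by auto
        then have "K - {m} = K" "K - {0} = K" by auto
        then show ?thesis using D c1 c2 xu False by simp
      qed
    qed
  qed
  show ?thesis using anti vals pos neg divp by blast
qed

lemma invH: "invol H \<iota> \<Longrightarrow> h \<in> H \<Longrightarrow> \<iota> h \<in> H \<and> \<iota> h \<noteq> h \<and> \<iota> (\<iota> h) = h"
  unfolding invol_def by blast

lemma key_flows:
  fixes w :: "'h \<Rightarrow> 'a::field_char_0" and \<iota> :: "'h \<Rightarrow> 'h" and vt :: "'h \<Rightarrow> 'v"
  assumes fin: "finite H" and inv: "invol H \<iota>" and cw: "circ H \<iota> vt w"
    and h0H: "h0 \<in> H" and w0: "w h0 \<noteq> 0"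
  shows "\<exists>f1 f2 :: 'h \<Rightarrow> rat. circ H \<iota> vt f1 \<and> circ H \<iota> vt f2 \<and> f1 h0 \<noteq> 0 \<and> f2 h0 \<noteq> 0 \<and>
     (\<forall>h\<in>H. w h \<noteq> w h0 \<and> w h \<noteq> - w h0 \<longrightarrow> f1 h * f2 h = 0)"
proof -
  define S where "S = {h\<in>H. w h = w h0 \<or> w h = - w h0}"
  have i0: "\<iota> h0 \<in> H" "\<iota> h0 \<noteq> h0" "\<iota> (\<iota> h0) = h0" using invH[OF inv h0H] by auto
  have wanti: "\<And>h. h \<in> H \<Longrightarrow> w (\<iota> h) = - w h" using cw unfolding circ_def by blast
  have h0S: "h0 \<in> S" using h0H S_def by auto
  have ih0S: "\<iota> h0 \<in> S" using i0 wanti[OF h0H] S_def by auto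
  have Sinv: "\<iota> h \<in> S \<longleftrightarrow> h \<in> S" if hH: "h \<in> H" for h
  proof -
    have "w (\<iota> h) = - w h" "\<iota> h \<in> H" using wanti[OF hH] invH[OF inv hH] by auto
    then show ?thesis unfolding S_def using hH by (auto simp: minus_equation_iff)
  qed
  define u where "u = vt h0"
  define v where "v = vt (\<iota> h0)"
  define c where "c h = (if h = h0 then -1 else if h = \<iota> h0 then 1 else (0::rat))" for h
  have c_alt: "c h = (if h = h0 then -1 else 0) + (if h = \<iota> h0 then 1 else 0)" for h
    using i0 by (simp add: c_def)
  have divc: "div_at H vt c x = (if x = u then -1 else 0) + (if x = v then 1 else 0)" for x
  proof -
    have "div_at H vt c x = (\<Sum>h\<in>{h\<in>H. vt h = x}. (if h = h0 then -1 else 0)) +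
        (\<Sum>h\<in>{h\<in>H. vt h = x}. (if h = \<iota> h0 then 1 else 0))"
      unfolding div_at_def c_alt by (simp add: sum.distrib)
    also have "\<dots> = (if x = u then -1 else 0) + (if x = v then 1 else 0)"
      using fin h0H i0 by (simp add: sum.delta u_def v_def)
    finally show ?thesis .
  qed
  have antic: "\<forall>h\<in>H. c (\<iota> h) = - c h"
  proof
    fix h assume hH: "h \<in> H"
    have ih: "\<iota> (\<iota> h) = h" using invH[OF inv hH] by simp
    show "c (\<iota> h) = - c h"
    proof (cases "h = h0")
      case True then show ?thesis using i0 by (simp add: c_def)
    next
      case False
      show ?thesis
      proof (cases "h = \<iota> h0")
        case True then show ?thesis using i0 by (simp add: c_def)
      next
        case False2: False
        have "\<iota> h \<noteq> h0" using False2 i0 ih by metis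
        moreover have "\<iota> h \<noteq> \<iota> h0" using False i0 ih by metis
        ultimately show ?thesis using False False2 by (simp add: c_def)
      qed
    qed
  qed
  have cS: "\<And>h. h \<notin> S \<Longrightarrow> c h = 0" using h0S ih0S by (auto simp: c_def)
  show ?thesis
  proof (cases "u = v")
    case True
    have "circ H \<iota> vt c" unfolding circ_def using antic divc True by simp
    moreover have "c h0 \<noteq> 0" by (simp add: c_def)
    moreover have "\<forall>h\<in>H. w h \<noteq> w h0 \<and> w h \<noteq> - w h0 \<longrightarrow> c h * c h = 0"
      using cS S_def by auto
    ultimately show ?thesis by blast
  next
    case uv: False
    define H' where "H' = H - {h0, \<iota> h0}"
    have H'H: "H' \<subseteq> H" by (auto simp: H'_def)
    have reach1: "(u, v) \<in> (Eg \<iota> vt H')\<^sup>*"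
    proof (rule ccontr)
      assume nr: "(u, v) \<notin> (Eg \<iota> vt H')\<^sup>*"
      define X where "X = {y. (u, y) \<in> (Eg \<iota> vt H')\<^sup>*}"
      have "{h\<in>H. vt h \<in> X \<and> vt (\<iota> h) \<notin> X} = {h0}"
      proof
        show "{h\<in>H. vt h \<in> X \<and> vt (\<iota> h) \<notin> X} \<subseteq> {h0}"
        proof
          fix h assume h: "h \<in> {h\<in>H. vt h \<in> X \<and> vt (\<iota> h) \<notin> X}"
          have "h \<notin> H'" using h reach_closed[of h H' u vt \<iota>] X_def by auto
          moreover have "h \<noteq> \<iota> h0" using h nr X_def v_def by auto
          ultimately show "h \<in> {h0}" using h H'_def by auto
        qed
        show "{h0} \<subseteq> {h\<in>H. vt h \<in> X \<and> vt (\<iota> h) \<notin> X}"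
          using h0H nr X_def u_def v_def by auto
      qed
      then have "w h0 = 0" using cut_zero[OF fin inv cw, of X] by simp
      then show False using w0 by simp
    qed
    obtain p1 :: "'h \<Rightarrow> rat" where p1a: "\<forall>h\<in>H. p1 (\<iota> h) = - p1 h"
      and p1v: "\<forall>h\<in>H. p1 h = 1 \<or> p1 h = 0 \<or> p1 h = -1"
      and p1p: "\<forall>h\<in>H. p1 h = 1 \<longrightarrow> h \<in> H'" and p1n: "\<forall>h\<in>H. p1 h = -1 \<longrightarrow> \<iota> h \<in> H'"
      and p1d: "\<forall>x. div_at H vt p1 x = (if x = u then 1 else if x = v then -1 else 0)"
      using path_flow[OF fin inv H'H reach1 uv] by blast
    have p1h0: "p1 h0 = 0" using p1v p1p p1n h0H i0 by (auto simp: H'_def)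
    have c1circ: "circ H \<iota> vt (\<lambda>h. p1 h + c h)"
      unfolding circ_def using p1a antic p1d divc uv by (simp add: div_add[OF fin])
    define A2 where "A2 = {h\<in>H'. h \<in> S \<or> p1 h \<le> 0}"
    have A2H: "A2 \<subseteq> H" using H'H by (auto simp: A2_def)
    show ?thesis
    proof (cases "(u, v) \<in> (Eg \<iota> vt A2)\<^sup>*")
      case True
      obtain q :: "'h \<Rightarrow> rat" where qa: "\<forall>h\<in>H. q (\<iota> h) = - q h"
        and qv: "\<forall>h\<in>H. q h = 1 \<or> q h = 0 \<or> q h = -1"
        and qp: "\<forall>h\<in>H. q h = 1 \<longrightarrow> h \<in> A2" and qn: "\<forall>h\<in>H. q h = -1 \<longrightarrow> \<iota> h \<in> A2"
        and qd: "\<forall>x. div_at H vt q x = (if x = u then 1 else if x = v then -1 else 0)"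
        using path_flow[OF fin inv A2H True uv] by blast
      have qh0: "q h0 = 0" using qv qp qn h0H i0 by (auto simp: A2_def H'_def)
      define g where "g = (\<lambda>h. p1 h + q h)"
      have ga: "\<forall>h\<in>H. g (\<iota> h) = - g h" using p1a qa by (simp add: g_def)
      have gd: "div_at H vt g x = (if x = u then 2 else if x = v then -2 else 0)" for x
        using p1d qd div_add[OF fin, of vt p1 q x] by (simp add: g_def)
      have gh0: "g h0 = 0" using p1h0 qh0 by (simp add: g_def)
      have gv: "g h = 1 \<or> g h = 0 \<or> g h = -1" if hH: "h \<in> H" and hS: "h \<notin> S" for h
      proof -
        have ihS: "\<iota> h \<notin> S" using Sinv[OF hH] hS by simp
        have ihH: "\<iota> h \<in> H" using invH[OF inv hH] by simp
        have "\<not> (p1 h = 1 \<and> q h = 1)" using qp hH hS A2_def by auto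
        moreover have "\<not> (p1 h = -1 \<and> q h = -1)"
        proof
          assume a: "p1 h = -1 \<and> q h = -1"
          then have "\<iota> h \<in> A2" using qn hH by auto
          moreover have "p1 (\<iota> h) = 1" using a p1a hH by simp
          ultimately show False using ihS A2_def by auto
        qed
        moreover have "p1 h = 1 \<or> p1 h = 0 \<or> p1 h = -1" "q h = 1 \<or> q h = 0 \<or> q h = -1"
          using p1v qv hH by auto
        ultimately show ?thesis unfolding g_def by (elim disjE) auto
      qed
      define A3 where "A3 = {h\<in>H'. g h > 0}"
      have A3H: "A3 \<subseteq> H" using H'H by (auto simp: A3_def)
      have reach3: "(u, v) \<in> (Eg \<iota> vt A3)\<^sup>*"
      proof (rule ccontr)
        assume nr: "(u, v) \<notin> (Eg \<iota> vt A3)\<^sup>*"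
        define X where "X = {y. (u, y) \<in> (Eg \<iota> vt A3)\<^sup>*}"
        define Cr where "Cr = {h\<in>H. vt h \<in> X \<and> vt (\<iota> h) \<notin> X}"
        have cgc: "circ H \<iota> vt (\<lambda>h. g h + 2 * c h)"
        proof -
          have "div_at H vt (\<lambda>h. g h + 2 * c h) x = 0" for x
          proof -
            have "div_at H vt (\<lambda>h. 2 * c h) x = 2 * div_at H vt c x"
              unfolding div_at_def by (simp add: sum_distrib_left)
            then show ?thesis using div_add[OF fin, of vt g "\<lambda>h. 2 * c h" x] gd[of x] divc[of x] uv
              by simp
          qed
          then show ?thesis using ga antic unfolding circ_def by simp
        qed
        have h0Cr: "h0 \<in> Cr" using h0H nr X_def Cr_def u_def v_def by auto
        have finCr: "finite Cr" using fin Cr_def by simp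
        have "(\<Sum>h\<in>Cr. g h + 2 * c h) = 0" using cut_zero[OF fin inv cgc, of X] Cr_def by simp
        moreover have "(\<Sum>h\<in>Cr. g h + 2 * c h) = (g h0 + 2 * c h0) + (\<Sum>h\<in>Cr - {h0}. g h + 2 * c h)"
          using sum.remove[OF finCr h0Cr] by simp
        moreover have "(\<Sum>h\<in>Cr - {h0}. g h + 2 * c h) \<le> 0"
        proof (rule sum_nonpos)
          fix h assume h: "h \<in> Cr - {h0}"
          have "h \<noteq> \<iota> h0" using h nr X_def Cr_def v_def by auto
          then have hH': "h \<in> H'" using h Cr_def H'_def by auto
          then have "c h = 0" using H'_def by (auto simp: c_def)
          moreover have "h \<notin> A3" using h reach_closed[of h A3 u vt \<iota>] X_def Cr_def by auto
          ultimately show "g h + 2 * c h \<le> 0" using hH' A3_def by auto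
        qed
        ultimately show False using gh0 by (simp add: c_def)
      qed
      obtain f1' :: "'h \<Rightarrow> rat" where fa: "\<forall>h\<in>H. f1' (\<iota> h) = - f1' h"
        and fv: "\<forall>h\<in>H. f1' h = 1 \<or> f1' h = 0 \<or> f1' h = -1"
        and fp: "\<forall>h\<in>H. f1' h = 1 \<longrightarrow> h \<in> A3" and fn: "\<forall>h\<in>H. f1' h = -1 \<longrightarrow> \<iota> h \<in> A3"
        and fd: "\<forall>x. div_at H vt f1' x = (if x = u then 1 else if x = v then -1 else 0)"
        using path_flow[OF fin inv A3H reach3 uv] by blast
      have fh0: "f1' h0 = 0" using fv fp fn h0H i0 by (auto simp: A3_def H'_def)
      define f1 where "f1 h = f1' h + c h" for h
      define f2 where "f2 h = g h - f1' h + c h" for h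
      have cf1: "circ H \<iota> vt f1"
        unfolding circ_def f1_def using fa antic fd divc uv by (simp add: div_add[OF fin])
      have cf2: "circ H \<iota> vt f2"
      proof -
        have "div_at H vt f2 x = 0" for x
        proof -
          have "div_at H vt f2 x = div_at H vt (\<lambda>h. g h - f1' h) x + div_at H vt c x"
            unfolding f2_def by (rule div_add[OF fin])
          also have "\<dots> = div_at H vt g x - div_at H vt f1' x + div_at H vt c x"
            by (simp add: div_diff)
          finally show ?thesis using gd[of x] fd divc[of x] uv by simp
        qed
        then show ?thesis unfolding circ_def f2_def using ga fa antic by simp
      qed
      have f1h0: "f1 h0 \<noteq> 0" using fh0 by (simp add: f1_def c_def)
      have f2h0: "f2 h0 \<noteq> 0" using fh0 gh0 by (simp add: f2_def c_def)
      have prod: "\<forall>h\<in>H. w h \<noteq> w h0 \<and> w h \<noteq> - w h0 \<longrightarrow> f1 h * f2 h = 0"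
      proof (intro ballI impI)
        fix h assume hH: "h \<in> H" and hw: "w h \<noteq> w h0 \<and> w h \<noteq> - w h0"
        have hS: "h \<notin> S" using hw S_def by auto
        have ch: "c h = 0" using cS[OF hS] .
        have ihH: "\<iota> h \<in> H" using invH[OF inv hH] by simp
        consider "f1' h = 1" | "f1' h = 0" | "f1' h = -1" using fv hH by blast
        then show "f1 h * f2 h = 0"
        proof cases
          case 1
          then have "g h > 0" using fp hH A3_def by auto
          then have "g h = 1" using gv[OF hH hS] by auto
          then show ?thesis using 1 ch by (simp add: f2_def)
        next
          case 2 then show ?thesis using ch by (simp add: f1_def)
        next
          case 3
          then have "g (\<iota> h) > 0" using fn hH A3_def by auto
          then have "g h < 0" using ga hH by simp
          then have "g h = -1" using gv[OF hH hS] by auto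
          then show ?thesis using 3 ch by (simp add: f2_def)
        qed
      qed
      show ?thesis using cf1 cf2 f1h0 f2h0 prod by blast
    next
      case nr: False
      define X where "X = {y. (u, y) \<in> (Eg \<iota> vt A2)\<^sup>*}"
      define Cr where "Cr = {h\<in>H. vt h \<in> X \<and> vt (\<iota> h) \<notin> X}"
      have h0Cr: "h0 \<in> Cr" using h0H nr X_def Cr_def u_def v_def by auto
      have finCr: "finite Cr" using fin Cr_def by simp
      have crp: "h \<in> H' \<and> h \<notin> S \<and> p1 h = 1" if h: "h \<in> Cr - {h0}" for h
      proof -
        have "h \<noteq> \<iota> h0" using h nr X_def Cr_def v_def by auto
        then have hH': "h \<in> H'" using h Cr_def H'_def by auto
        moreover have "h \<notin> A2" using h reach_closed[of h A2 u vt \<iota>] X_def Cr_def by auto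
        ultimately have "h \<notin> S" "p1 h > 0" unfolding A2_def by auto
        moreover have "p1 h = 1 \<or> p1 h = 0 \<or> p1 h = -1" using p1v hH' H'H by blast
        ultimately show ?thesis using hH' by auto
      qed
      have s0: "(\<Sum>h\<in>Cr. p1 h + c h) = 0" using cut_zero[OF fin inv c1circ, of X] Cr_def by simp
      have s1: "(\<Sum>h\<in>Cr. p1 h + c h) = (p1 h0 + c h0) + (\<Sum>h\<in>Cr - {h0}. p1 h + c h)"
        using sum.remove[OF finCr h0Cr] by simp
      have s2: "(\<Sum>h\<in>Cr - {h0}. p1 h + c h) = (\<Sum>h\<in>Cr - {h0}. 1)"
      proof (rule sum.cong[OF refl])
        fix h assume h: "h \<in> Cr - {h0}"
        have "h \<in> H'" "p1 h = 1" using crp[OF h] by auto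
        moreover have "c h = 0" using \<open>h \<in> H'\<close> unfolding H'_def c_def by auto
        ultimately show "p1 h + c h = 1" by simp
      qed
      have s3: "p1 h0 + c h0 = -1" using p1h0 by (simp add: c_def)
      have "(\<Sum>h\<in>Cr - {h0}. (1::rat)) = of_nat (card (Cr - {h0}))" by simp
      then have "(-1::rat) + of_nat (card (Cr - {h0})) = 0" using s0 s1 s2 s3 by simp
      then have "card (Cr - {h0}) = 1" by simp
      then obtain h1 where Cr1: "Cr - {h0} = {h1}" by (auto simp: card_1_singleton_iff)
      have h1C: "h1 \<in> Cr - {h0}" using Cr1 by simp
      have h1: "h1 \<in> H'" "h1 \<notin> S" "vt h1 \<in> X" "vt (\<iota> h1) \<notin> X"
        using crp[OF h1C] h1C unfolding Cr_def by auto
      have h1H: "h1 \<in> H" using h1 H'H by auto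
      have ih1: "\<iota> h1 \<in> H" "\<iota> h1 \<noteq> h1" "\<iota> (\<iota> h1) = h1" using invH[OF inv h1H] by auto
      define A4 where "A4 = H' - {h1, \<iota> h1}"
      have reach4: "(u, v) \<in> (Eg \<iota> vt A4)\<^sup>*"
      proof (rule ccontr)
        assume nr4: "(u, v) \<notin> (Eg \<iota> vt A4)\<^sup>*"
        define Y where "Y = {y. (u, y) \<in> (Eg \<iota> vt A4)\<^sup>*}"
        define CrY where "CrY = {h\<in>H. vt h \<in> Y \<and> vt (\<iota> h) \<notin> Y}"
        have vY: "v \<notin> Y" using nr4 Y_def by simp
        have sub: "CrY \<subseteq> {h0, h1, \<iota> h1}"
        proof
          fix h assume h: "h \<in> CrY"
          have hH: "h \<in> H" and hY: "vt h \<in> Y" and hY': "vt (\<iota> h) \<notin> Y" using h CrY_def by auto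
          have "h \<noteq> \<iota> h0" using hY vY v_def by auto
          moreover have "h \<notin> A4"
          proof
            assume "h \<in> A4"
            then have "vt (\<iota> h) \<in> Y" using reach_closed[of h A4 u vt \<iota>] hY Y_def by simp
            then show False using hY' by simp
          qed
          ultimately show "h \<in> {h0, h1, \<iota> h1}" using hH unfolding A4_def H'_def by blast
        qed
        have h0Y: "h0 \<in> CrY" using h0H vY Y_def CrY_def u_def v_def by simp
        have h0h1: "h0 \<noteq> h1" "h0 \<noteq> \<iota> h1" using h1(1) ih1 unfolding H'_def by auto
        have not_both: "\<not> (h1 \<in> CrY \<and> \<iota> h1 \<in> CrY)" using ih1 CrY_def by auto
        have sw: "(\<Sum>h\<in>CrY. w h) = 0" using cut_zero[OF fin inv cw, of Y] CrY_def by simp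
        have wi1: "w (\<iota> h1) = - w h1" using wanti[OF h1H] .
        have "w h1 = w h0 \<or> w h1 = - w h0 \<or> w h0 = 0"
        proof (cases "h1 \<in> CrY")
          case True
          then have "\<iota> h1 \<notin> CrY" using not_both by blast
          then have "CrY = {h0, h1}" using sub h0Y True by blast
          then have "w h0 + w h1 = 0" using sw h0h1 by simp
          then have "w h1 = - w h0" by (simp add: eq_neg_iff_add_eq_0 add.commute)
          then show ?thesis by simp
        next
          case False
          show ?thesis
          proof (cases "\<iota> h1 \<in> CrY")
            case True
            then have "CrY = {h0, \<iota> h1}" using sub h0Y False by blast
            then have "w h0 + w (\<iota> h1) = 0" using sw h0h1 by simp
            then have "w h1 = w h0" using wi1 by simp
            then show ?thesis by simp
          next
            case False2: False
            then have "CrY = {h0}" using sub h0Y False by blast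
            then show ?thesis using sw by simp
          qed
        qed
        then show False using h1(2) h1H S_def w0 by auto
      qed
      have uX: "u \<in> X" using X_def by simp
      have vX: "v \<notin> X" using nr X_def by simp
      obtain h where h: "h \<in> A4" "vt h \<in> X" "vt (\<iota> h) \<notin> X" using escape[OF reach4 uX vX] by blast
      have "h \<in> H" using h(1) unfolding A4_def H'_def by blast
      then have "h \<in> Cr" using h Cr_def by blast
      then have "h = h0 \<or> h = h1" using Cr1 by blast
      then show ?thesis using h(1) unfolding A4_def H'_def by blast
    qed
  qed
qed

interpretation vc: vector_space "\<lambda>(q::rat) (z::complex). of_rat q * z"
  by unfold_locales (simp_all add: algebra_simps of_rat_add of_rat_mult)

interpretation vf: vector_space "\<lambda>(q::rat) (f::'a \<Rightarrow> rat). (\<lambda>x. q * f x)"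
  by unfold_locales (simp_all add: fun_eq_iff algebra_simps)

lemma sum_fun_apply: "(\<Sum>i\<in>A. F i) x = (\<Sum>i\<in>A. F i x)"
  by (induction A rule: infinite_finite_induct) auto

definition Psi :: "'h set \<Rightarrow> ('h \<Rightarrow> complex) \<Rightarrow> ('h \<Rightarrow> rat) \<Rightarrow> complex" where
  "Psi H w q = (\<Sum>h\<in>H. of_rat (q h) * w h)"

definition pairing :: "'h set \<Rightarrow> ('h \<Rightarrow> rat) \<Rightarrow> ('h \<Rightarrow> rat) \<Rightarrow> rat" where
  "pairing H f q = (\<Sum>h\<in>H. q h * f h)"

definition VH :: "'h set \<Rightarrow> ('h \<Rightarrow> rat) set" where
  "VH H = {q. \<forall>x. x \<notin> H \<longrightarrow> q x = 0}"

definition delta :: "'h \<Rightarrow> 'h \<Rightarrow> rat" where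
  "delta h = (\<lambda>x. if x = h then 1 else 0)"

lemma Psi_linear: "Vector_Spaces.linear (\<lambda>(q::rat) (f::'h \<Rightarrow> rat). (\<lambda>x. q * f x)) (\<lambda>(q::rat) (z::complex). of_rat q * z) (Psi H w)"
proof -
  have a: "Psi H w (x + y) = Psi H w x + Psi H w y" for x y :: "'h \<Rightarrow> rat"
  proof -
    have "Psi H w (x + y) = (\<Sum>h\<in>H. of_rat (x h) * w h + of_rat (y h) * w h)"
      unfolding Psi_def by (rule sum.cong) (simp_all add: of_rat_add distrib_right)
    then show ?thesis unfolding Psi_def by (simp only: sum.distrib)
  qed
  have b: "Psi H w (\<lambda>h. c * x h) = of_rat c * Psi H w x" for c and x :: "'h \<Rightarrow> rat"
  proof -
    have "Psi H w (\<lambda>h. c * x h) = (\<Sum>h\<in>H. of_rat c * (of_rat (x h) * w h))"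
      unfolding Psi_def by (rule sum.cong) (simp_all add: of_rat_mult)
    then show ?thesis unfolding Psi_def by (simp only: sum_distrib_left)
  qed
  show ?thesis
    unfolding Vector_Spaces.linear_iff using a b vf.vector_space_axioms vc.vector_space_axioms by blast
qed

lemma VH_subspace: "vf.subspace (VH H)"
  unfolding vf.subspace_def VH_def by auto

lemma VH_span_delta:
  assumes fin: "finite H"
  shows "VH H \<subseteq> vf.span (delta ` H)"
proof
  fix q assume q: "q \<in> VH H"
  have "q = (\<Sum>h\<in>H. (\<lambda>x. q h * delta h x))"
  proof
    fix x
    have "(\<Sum>h\<in>H. (\<lambda>x. q h * delta h x)) x = (\<Sum>h\<in>H. q h * delta h x)" by (rule sum_fun_apply)
    also have "\<dots> = (\<Sum>h\<in>H. if h = x then q h else 0)"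
      by (rule sum.cong) (auto simp: delta_def)
    also have "\<dots> = q x" using fin q by (simp add: VH_def)
    finally show "q x = (\<Sum>h\<in>H. (\<lambda>x. q h * delta h x)) x" by simp
  qed
  also have "\<dots> \<in> vf.span (delta ` H)"
    by (intro vf.span_sum vf.span_scale vf.span_base) auto
  finally show "q \<in> vf.span (delta ` H)" .
qed

lemma delta_VH: "h \<in> H \<Longrightarrow> delta h \<in> VH H"
  by (auto simp: VH_def delta_def)

lemma Psi_delta: "finite H \<Longrightarrow> h \<in> H \<Longrightarrow> Psi H w (delta h) = w h"
proof -
  assume "finite H" "h \<in> H"
  have "Psi H w (delta h) = (\<Sum>x\<in>H. if x = h then w x else 0)"
    unfolding Psi_def delta_def by (rule sum.cong) auto
  then show ?thesis using \<open>finite H\<close> \<open>h \<in> H\<close> by (simp add: sum.delta')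
qed

lemma pairing_delta: "finite H \<Longrightarrow> h \<in> H \<Longrightarrow> pairing H f (delta h) = f h"
proof -
  assume "finite H" "h \<in> H"
  have "pairing H f (delta h) = (\<Sum>x\<in>H. if x = h then f x else 0)"
    unfolding pairing_def delta_def by (rule sum.cong) auto
  then show ?thesis using \<open>finite H\<close> \<open>h \<in> H\<close> by (simp add: sum.delta')
qed


definition ind :: "'h set \<Rightarrow> 'h \<Rightarrow> rat" where
  "ind s = (\<lambda>x. if x \<in> s then 1 else 0)"

definition kap :: "'h set \<Rightarrow> ('h \<Rightarrow> 'v) \<Rightarrow> ('h set + 'v) \<Rightarrow> 'h \<Rightarrow> rat" where
  "kap H vt j = (case j of Inl s \<Rightarrow> ind s | Inr v \<Rightarrow> ind {h\<in>H. vt h = v})"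

definition pairs :: "'h set \<Rightarrow> ('h \<Rightarrow> 'h) \<Rightarrow> 'h set set" where
  "pairs H \<iota> = (\<lambda>h. {h, \<iota> h}) ` H"

lemma ind_inj: "ind s = ind t \<Longrightarrow> s = t"
  unfolding ind_def by (metis (full_types) one_neq_zero subsetI subset_antisym)

lemma pairs_mem:
  assumes inv: "invol H \<iota>" and s: "s \<in> pairs H \<iota>" and h: "h \<in> H"
  shows "h \<in> s \<longleftrightarrow> s = {h, \<iota> h}"
proof -
  obtain a where a: "a \<in> H" "s = {a, \<iota> a}" using s unfolding pairs_def by auto
  have ia: "\<iota> (\<iota> a) = a" using invH[OF inv a(1)] by simp
  show ?thesis
  proof
    assume "h \<in> s"
    then have "h = a \<or> h = \<iota> a" using a by auto
    then show "s = {h, \<iota> h}" using a ia by auto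
  next
    assume "s = {h, \<iota> h}" then show "h \<in> s" by simp
  qed
qed

lemma pairs_card:
  assumes fin: "finite H" and inv: "invol H \<iota>"
  shows "2 * card (pairs H \<iota>) = card H"
proof -
  have U: "\<Union> (pairs H \<iota>) = H" using inv unfolding pairs_def invol_def by auto
  have fP: "finite (pairs H \<iota>)" using fin unfolding pairs_def by simp
  have fU: "finite (\<Union> (pairs H \<iota>))" using U fin by simp
  have A: "\<forall>c\<in>pairs H \<iota>. card c = 2" using inv unfolding pairs_def invol_def by auto
  have B: "\<forall>c1\<in>pairs H \<iota>. \<forall>c2\<in>pairs H \<iota>. c1 \<noteq> c2 \<longrightarrow> c1 \<inter> c2 = {}"
  proof (intro ballI impI)
      fix c1 c2 assume c1: "c1 \<in> pairs H \<iota>" and c2: "c2 \<in> pairs H \<iota>" and ne: "c1 \<noteq> c2"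
      show "c1 \<inter> c2 = {}"
      proof (rule ccontr)
        assume "c1 \<inter> c2 \<noteq> {}"
        then obtain h where h: "h \<in> c1" "h \<in> c2" by blast
        have "h \<in> H" using c1 h unfolding pairs_def using inv unfolding invol_def by auto
        then show False using pairs_mem[OF inv c1] pairs_mem[OF inv c2] h ne by simp
      qed
  qed
  have "2 * card (pairs H \<iota>) = card (\<Union> (pairs H \<iota>))"
    using card_partition[OF fP fU] A B by blast
  then show ?thesis using U by simp
qed


definition graph_ok :: "'h set \<Rightarrow> 'v set \<Rightarrow> ('h \<Rightarrow> 'h) \<Rightarrow> ('h \<Rightarrow> 'v) \<Rightarrow> bool" where
  "graph_ok H V \<iota> vt \<longleftrightarrow> finite V \<and> finite H \<and> invol H \<iota> \<and> (\<forall>h\<in>H. vt h \<in> V) \<and>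
     (\<forall>x\<in>V. card {h\<in>H. vt h = x} \<ge> 3) \<and> (\<forall>x\<in>V. \<forall>y\<in>V. (x, y) \<in> (Eg \<iota> vt H)\<^sup>*)"

lemma graph_okD:
  assumes "graph_ok H V \<iota> vt"
  shows "finite V" "finite H" "invol H \<iota>" "\<And>h. h \<in> H \<Longrightarrow> vt h \<in> V"
    "\<And>x. x \<in> V \<Longrightarrow> card {h\<in>H. vt h = x} \<ge> 3"
    "\<And>x y. x \<in> V \<Longrightarrow> y \<in> V \<Longrightarrow> (x, y) \<in> (Eg \<iota> vt H)\<^sup>*"
  using assms unfolding graph_ok_def by auto

definition Jset :: "'h set \<Rightarrow> ('h \<Rightarrow> 'h) \<Rightarrow> 'v set \<Rightarrow> 'v \<Rightarrow> ('h set + 'v) set" where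
  "Jset H \<iota> V v0 = Inl ` pairs H \<iota> \<union> Inr ` (V - {v0})"

lemma pairs_sub: "invol H \<iota> \<Longrightarrow> s \<in> pairs H \<iota> \<Longrightarrow> s \<subseteq> H"
  unfolding pairs_def invol_def by auto

lemma pairs_card_le: "s \<in> pairs H \<iota> \<Longrightarrow> card s \<le> 2"
  unfolding pairs_def by (auto simp: card_insert_if)

lemma kap_inj:
  assumes G: "graph_ok H V \<iota> vt"
  shows "inj_on (kap H vt) (Jset H \<iota> V v0)"
proof (rule inj_onI)
  have inv: "invol H \<iota>" using graph_okD[OF G] by blast
  fix a b assume a: "a \<in> Jset H \<iota> V v0" and b: "b \<in> Jset H \<iota> V v0" and e: "kap H vt a = kap H vt b"
  have nonpair: False if "s \<in> pairs H \<iota>" "v \<in> V" "ind s = ind {h\<in>H. vt h = v}" for s v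
  proof -
    have "s = {h\<in>H. vt h = v}" using ind_inj that(3) .
    moreover have "card {h\<in>H. vt h = v} \<ge> 3" using graph_okD(5)[OF G that(2)] .
    ultimately show False using pairs_card_le[OF that(1)] by simp
  qed
  show "a = b"
  proof (cases a)
    case (Inl s)
    show ?thesis
    proof (cases b)
      case (Inl t)
      then have "ind s = ind t" using \<open>a = Inl s\<close> e by (simp add: kap_def)
      then show ?thesis using \<open>a = Inl s\<close> Inl ind_inj by blast
    next
      case (Inr v)
      then have "v \<in> V" "s \<in> pairs H \<iota>" using a b \<open>a = Inl s\<close> unfolding Jset_def by auto
      moreover have "ind s = ind {h\<in>H. vt h = v}" using e \<open>a = Inl s\<close> Inr by (simp add: kap_def)
      ultimately show ?thesis using nonpair by blast
    qed
  next
    case (Inr v)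
    show ?thesis
    proof (cases b)
      case (Inl t)
      then have "v \<in> V" "t \<in> pairs H \<iota>" using a b \<open>a = Inr v\<close> unfolding Jset_def by auto
      moreover have "ind t = ind {h\<in>H. vt h = v}" using e \<open>a = Inr v\<close> Inl by (simp add: kap_def)
      ultimately show ?thesis using nonpair by blast
    next
      case (Inr v')
      have vV: "v \<in> V" using a \<open>a = Inr v\<close> unfolding Jset_def by auto
      have "card {h\<in>H. vt h = v} \<ge> 3" using graph_okD(5)[OF G vV] .
      then have "{h\<in>H. vt h = v} \<noteq> {}" by (metis card.empty not_numeral_le_zero)
      then obtain h where h: "h \<in> H" "vt h = v" by blast
      have "ind {h\<in>H. vt h = v} = ind {h\<in>H. vt h = v'}" using e \<open>a = Inr v\<close> Inr by (simp add: kap_def)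
      then have "{h\<in>H. vt h = v} = {h\<in>H. vt h = v'}" by (rule ind_inj)
      then have "v = v'" using h by blast
      then show ?thesis using \<open>a = Inr v\<close> Inr by simp
    qed
  qed
qed

lemma Jset_card:
  fixes H :: "'h set" and vt :: "'h \<Rightarrow> 'v" and V :: "'v set"
  assumes G: "graph_ok H V \<iota> vt" and v0: "v0 \<in> V"
  shows "card (Jset H \<iota> V v0) = card (pairs H \<iota>) + (card V - 1)"
proof -
  have fin: "finite H" "finite V" using graph_okD[OF G] by auto
  have fP: "finite (pairs H \<iota>)" using fin unfolding pairs_def by simp
  have "card (Jset H \<iota> V v0) = card (Inl ` pairs H \<iota> :: ('h set + 'v) set) + card (Inr ` (V - {v0}) :: ('h set + 'v) set)"
    unfolding Jset_def by (rule card_Un_disjoint) (use fP fin in auto)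
  also have "\<dots> = card (pairs H \<iota>) + card (V - {v0})"
    by (simp add: card_image)
  also have "card (V - {v0}) = card V - 1" using v0 fin by simp
  finally show ?thesis .
qed

lemma kap_VH:
  assumes G: "graph_ok H V \<iota> vt"
  shows "kap H vt ` Jset H \<iota> V v0 \<subseteq> VH H"
proof
  have inv: "invol H \<iota>" using graph_okD[OF G] by blast
  fix k assume "k \<in> kap H vt ` Jset H \<iota> V v0"
  then obtain j where j: "j \<in> Jset H \<iota> V v0" "k = kap H vt j" by blast
  show "k \<in> VH H"
  proof (cases j)
    case (Inl s)
    then have "s \<in> pairs H \<iota>" using j unfolding Jset_def by auto
    then have "s \<subseteq> H" using pairs_sub[OF inv] by auto
    then show ?thesis using j Inl by (auto simp: VH_def kap_def ind_def)
  next
    case (Inr v)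
    then show ?thesis using j by (auto simp: VH_def kap_def ind_def)
  qed
qed

lemma sum_ind:
  fixes f :: "'h \<Rightarrow> 'a::field_char_0"
  assumes "finite H" "s \<subseteq> H"
  shows "(\<Sum>h\<in>H. of_rat (ind s h) * f h) = (\<Sum>h\<in>s. f h)"
proof -
  have "(\<Sum>h\<in>H. of_rat (ind s h) * f h) = (\<Sum>h\<in>H. if h \<in> s then f h else 0)"
    by (rule sum.cong) (auto simp: ind_def)
  also have "\<dots> = (\<Sum>h\<in>H \<inter> s. f h)" using assms(1) by (simp add: sum.inter_restrict)
  also have "H \<inter> s = s" using assms(2) by auto
  finally show ?thesis .
qed

lemma kap_circ:
  fixes f :: "'h \<Rightarrow> 'a::field_char_0"
  assumes G: "graph_ok H V \<iota> vt" and c: "circ H \<iota> vt f" and j: "j \<in> Jset H \<iota> V v0"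
  shows "(\<Sum>h\<in>H. of_rat (kap H vt j h) * f h) = 0"
proof -
  have inv: "invol H \<iota>" and fin: "finite H" using graph_okD[OF G] by auto
  show ?thesis
  proof (cases j)
    case (Inl s)
    then have sP: "s \<in> pairs H \<iota>" using j unfolding Jset_def by auto
    then obtain a where a: "a \<in> H" "s = {a, \<iota> a}" unfolding pairs_def by auto
    have "(\<Sum>h\<in>H. of_rat (kap H vt j h) * f h) = (\<Sum>h\<in>s. f h)"
      using sum_ind[OF fin pairs_sub[OF inv sP]] Inl by (simp add: kap_def)
    also have "\<dots> = f a + f (\<iota> a)"
    proof -
      have ne: "a \<noteq> \<iota> a" using invH[OF inv a(1)] by metis
      then show ?thesis using a(2) by simp
    qed
    also have "\<dots> = 0" using c a unfolding circ_def by simp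
    finally show ?thesis .
  next
    case (Inr v)
    have "(\<Sum>h\<in>H. of_rat (kap H vt j h) * f h) = (\<Sum>h\<in>{h\<in>H. vt h = v}. f h)"
      using sum_ind[OF fin, of "{h\<in>H. vt h = v}" f] Inr by (simp add: kap_def)
    also have "\<dots> = 0" using c unfolding circ_def div_at_def by simp
    finally show ?thesis .
  qed
qed


lemma Jset_finite: "graph_ok H V \<iota> vt \<Longrightarrow> finite (Jset H \<iota> V v0)"
proof -
  assume G: "graph_ok H V \<iota> vt"
  have "finite H" "finite V" using graph_okD[OF G] by auto
  then show ?thesis unfolding Jset_def pairs_def by simp
qed

lemma kap_indep:
  fixes H :: "'h set" and vt :: "'h \<Rightarrow> 'v" and V :: "'v set"
  assumes G: "graph_ok H V \<iota> vt" and v0: "v0 \<in> V"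
  shows "vf.independent (kap H vt ` Jset H \<iota> V v0)"
proof (rule vf.independent_if_scalars_zero)
  let ?J = "Jset H \<iota> V v0"
  let ?P = "pairs H \<iota>"
  have fin: "finite H" "finite V" and inv: "invol H \<iota>" using graph_okD[OF G] by auto
  have finJ: "finite ?J" using Jset_finite[OF G] .
  show "finite (kap H vt ` ?J)" using finJ by simp
  fix c :: "('h \<Rightarrow> rat) \<Rightarrow> rat" and x
  assume sum0: "(\<Sum>k\<in>kap H vt ` ?J. (\<lambda>y. c k * k y)) = 0" and xA: "x \<in> kap H vt ` ?J"
  define a where "a s = c (kap H vt (Inl s))" for s
  define bb where "bb v = (if v = v0 then 0 else c (kap H vt (Inr v)))" for v
  have finP: "finite ?P" using fin unfolding pairs_def by simp
  have eq: "a {h, \<iota> h} + bb (vt h) = 0" if hH: "h \<in> H" for h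
  proof -
    have "(\<Sum>k\<in>kap H vt ` ?J. c k * k h) = 0"
      using fun_cong[OF sum0, of h] by (simp add: sum_fun_apply)
    moreover have "(\<Sum>k\<in>kap H vt ` ?J. c k * k h) = (\<Sum>j\<in>?J. c (kap H vt j) * kap H vt j h)"
      by (rule sum.reindex[OF kap_inj[OF G], unfolded comp_def])
    moreover have "(\<Sum>j\<in>?J. c (kap H vt j) * kap H vt j h) =
        (\<Sum>j\<in>Inl ` ?P. c (kap H vt j) * kap H vt j h) + (\<Sum>j\<in>Inr ` (V - {v0}). c (kap H vt j) * kap H vt j h)"
      unfolding Jset_def by (rule sum.union_disjoint) (use finP fin in auto)
    moreover have "(\<Sum>j\<in>Inl ` ?P. c (kap H vt j) * kap H vt j h) = (\<Sum>s\<in>?P. a s * ind s h)"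
      by (subst sum.reindex) (auto simp: a_def kap_def)
    moreover have "(\<Sum>s\<in>?P. a s * ind s h) = (\<Sum>s\<in>?P. if s = {h, \<iota> h} then a s else 0)"
      by (rule sum.cong[OF refl]) (use pairs_mem[OF inv _ hH] in \<open>auto simp: ind_def\<close>)
    moreover have "\<dots> = a {h, \<iota> h}" using finP hH by (simp add: pairs_def)
    moreover have "(\<Sum>j\<in>Inr ` (V - {v0}). c (kap H vt j) * kap H vt j h) =
        (\<Sum>v\<in>V - {v0}. if v = vt h then c (kap H vt (Inr v)) else 0)"
    proof -
      have "(\<Sum>j\<in>Inr ` (V - {v0}). c (kap H vt j) * kap H vt j h) =
          (\<Sum>v\<in>V - {v0}. c (kap H vt (Inr v)) * kap H vt (Inr v) h)"
        by (subst sum.reindex) auto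
      also have "\<dots> = (\<Sum>v\<in>V - {v0}. if v = vt h then c (kap H vt (Inr v)) else 0)"
        by (rule sum.cong[OF refl]) (use hH in \<open>auto simp: kap_def ind_def\<close>)
      finally show ?thesis .
    qed
    moreover have "\<dots> = bb (vt h)"
      using fin graph_okD(4)[OF G hH] by (simp add: sum.delta' bb_def)
    ultimately show ?thesis by simp
  qed
  have edge: "bb (vt h) = bb (vt (\<iota> h))" if hH: "h \<in> H" for h
  proof -
    have i: "\<iota> h \<in> H" "\<iota> (\<iota> h) = h" using invH[OF inv hH] by auto
    have "{\<iota> h, \<iota> (\<iota> h)} = {h, \<iota> h}" using i by auto
    then show ?thesis using eq[OF hH] eq[OF i(1)] by simp
  qed
  have reach: "bb y = bb v0" if "(v0, y) \<in> (Eg \<iota> vt H)\<^sup>*" for y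
    using that
  proof (induction rule: rtrancl_induct)
    case base then show ?case by simp
  next
    case (step y z)
    then obtain h where "h \<in> H" "y = vt h" "z = vt (\<iota> h)" unfolding Eg_def by auto
    then show ?case using step edge by metis
  qed
  have bb0: "bb y = 0" if "y \<in> V" for y
    using reach[OF graph_okD(6)[OF G v0 that]] by (simp add: bb_def)
  have a0: "a s = 0" if sP: "s \<in> ?P" for s
  proof -
    obtain h where h: "h \<in> H" "s = {h, \<iota> h}" using sP unfolding pairs_def by auto
    then show ?thesis using eq[OF h(1)] bb0[OF graph_okD(4)[OF G h(1)]] by simp
  qed
  obtain j where j: "j \<in> ?J" "x = kap H vt j" using xA by blast
  show "c x = 0"
  proof (cases j)
    case (Inl s)
    then have "s \<in> ?P" using j unfolding Jset_def by auto
    then show ?thesis using a0 j Inl a_def by simp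
  next
    case (Inr v)
    then have "v \<in> V" "v \<noteq> v0" using j unfolding Jset_def by auto
    then show ?thesis using bb0[of v] j Inr bb_def by simp
  qed
qed

interpretation vfc: vector_space_pair "\<lambda>(q::rat) (f::'a \<Rightarrow> rat). (\<lambda>x. q * f x)" "\<lambda>(q::rat) (z::complex). of_rat q * z"
  by unfold_locales

lemma Psi_add: "Psi H w (x + y) = Psi H w x + Psi H w y"
  using Psi_linear[of H w] unfolding Vector_Spaces.linear_iff by blast

lemma Psi_scale: "Psi H w (\<lambda>h. c * x h) = of_rat c * Psi H w x"
  using Psi_linear[of H w] unfolding Vector_Spaces.linear_iff by blast

lemma Psi_zero: "Psi H w 0 = 0"
  unfolding Psi_def by simp

lemma pairing_add: "pairing H f (x + y) = pairing H f x + pairing H f y"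
  unfolding pairing_def by (simp add: distrib_right sum.distrib)

lemma pairing_scale: "pairing H f (\<lambda>h. c * x h) = c * pairing H f x"
  unfolding pairing_def by (simp add: sum_distrib_left mult.assoc)

lemma Psi_kernel_subspace: "vf.subspace {q. Psi H w q = 0}"
proof -
  have "Psi H w (\<lambda>x. 0) = 0" by (simp add: Psi_def)
  then show ?thesis unfolding vf.subspace_def by (simp add: Psi_add Psi_scale zero_fun_def)
qed

lemma pairing_kernel_subspace: "vf.subspace {q. pairing H f q = 0}"
proof -
  have "pairing H f (\<lambda>x. 0) = 0" by (simp add: pairing_def)
  then show ?thesis unfolding vf.subspace_def by (simp add: pairing_add pairing_scale zero_fun_def)
qed


lemma core:
  fixes H :: "'h set" and vt :: "'h \<Rightarrow> 'v" and V :: "'v set" and w :: "'h \<Rightarrow> complex"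
    and f :: "'h \<Rightarrow> rat" and bs :: "complex set"
  assumes G: "graph_ok H V \<iota> vt" and v0: "v0 \<in> V"
    and genus: "card H + 2 = 2 * g + 2 * card V"
    and cw: "circ H \<iota> vt w" and cf: "circ H \<iota> vt f"
    and bi: "vc.independent bs" and bc: "card bs = g" and bI: "bs \<subseteq> Psi H w ` VH H"
    and q: "q \<in> VH H" and q0: "Psi H w q = 0"
  shows "pairing H f q = 0"
proof -
  have fin: "finite H" "finite V" and inv: "invol H \<iota>" using graph_okD[OF G] by auto
  let ?J = "Jset H \<iota> V v0"
  define K where "K = kap H vt ` ?J"
  have KV: "K \<subseteq> VH H" using kap_VH[OF G] K_def by simp
  have Ki: "vf.independent K" using kap_indep[OF G v0] K_def by simp
  have cardK: "card K = card (pairs H \<iota>) + (card V - 1)"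
    using Jset_card[OF G v0] card_image[OF kap_inj[OF G]] K_def by simp
  have cP: "2 * card (pairs H \<iota>) = card H" using pairs_card[OF fin(1) inv] .
  have V1: "card V \<ge> 1" using v0 fin by (metis One_nat_def Suc_leI card_gt_0_iff empty_iff)
  have cKg: "card K + g = card H" using cardK cP genus V1 by linarith
  obtain B where KB: "K \<subseteq> B" and BV: "B \<subseteq> VH H" and Bi: "vf.independent B" and VB: "VH H \<subseteq> vf.span B"
    using vf.maximal_independent_subset_extend[OF KV Ki] by blast
  have Bd: "B \<subseteq> vf.span (delta ` H)" using BV VH_span_delta[OF fin(1)] by blast
  have finB: "finite B" and cB: "card B \<le> card (delta ` H)"
    using vf.independent_span_bound[OF _ Bi Bd] fin by auto
  have cB2: "card B \<le> card H" using cB card_image_le[OF fin(1), of delta] by linarith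
  define C where "C = B - K"
  have finC: "finite C" using finB C_def by simp
  have BKC: "B = K \<union> C" using KB C_def by auto
  have finK: "finite K" using finB KB finite_subset by blast
  have cC: "card C \<le> g" using card_Diff_subset[OF finK KB] cB2 cKg C_def by simp
  have PsiK: "Psi H w k = 0" if "k \<in> vf.span K" for k
  proof -
    have "K \<subseteq> {q. Psi H w q = 0}"
    proof
      fix k assume "k \<in> K"
      then obtain j where j: "j \<in> ?J" "k = kap H vt j" using K_def by auto
      show "k \<in> {q. Psi H w q = 0}" using kap_circ[OF G cw j(1)] j(2) by (simp add: Psi_def)
    qed
    then have "vf.span K \<subseteq> {q. Psi H w q = 0}" using vf.span_minimal Psi_kernel_subspace by blast
    then show ?thesis using that by blast
  qed
  have pairK: "pairing H f k = 0" if "k \<in> vf.span K" for k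
  proof -
    have "K \<subseteq> {q. pairing H f q = 0}"
    proof
      fix k assume "k \<in> K"
      then obtain j where j: "j \<in> ?J" "k = kap H vt j" using K_def by auto
      show "k \<in> {q. pairing H f q = 0}" using kap_circ[OF G cf j(1)] j(2) by (simp add: pairing_def)
    qed
    then have "vf.span K \<subseteq> {q. pairing H f q = 0}" using vf.span_minimal pairing_kernel_subspace by blast
    then show ?thesis using that by blast
  qed
  have split: "\<exists>k c. k \<in> vf.span K \<and> c \<in> vf.span C \<and> x = k + c" if "x \<in> VH H" for x
  proof -
    have "x \<in> vf.span (K \<union> C)" using that VB BKC by blast
    then show ?thesis unfolding vf.span_Un by blast
  qed
  have bsC: "bs \<subseteq> vc.span (Psi H w ` C)"
  proof
    fix b assume "b \<in> bs"
    then obtain x where x: "x \<in> VH H" "b = Psi H w x" using bI by blast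
    obtain k c where kc: "k \<in> vf.span K" "c \<in> vf.span C" "x = k + c" using split[OF x(1)] by blast
    have "b = Psi H w c" using x kc PsiK[OF kc(1)] by (simp add: Psi_add)
    also have "\<dots> \<in> Psi H w ` vf.span C" using kc(2) by blast
    also have "\<dots> = vc.span (Psi H w ` C)" by (rule vfc.linear_span_image[OF Psi_linear, symmetric])
    finally show "b \<in> vc.span (Psi H w ` C)" .
  qed
  have finPC: "finite (Psi H w ` C)" using finC by simp
  have gle: "g \<le> card (Psi H w ` C)" using vc.independent_span_bound[OF finPC bi bsC] bc by simp
  have cPC: "card (Psi H w ` C) = card C" using gle card_image_le[OF finC, of "Psi H w"] cC by linarith
  have injC: "inj_on (Psi H w) C" using eq_card_imp_inj_on[OF finC cPC] .
  have indPC: "vc.independent (Psi H w ` C)"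
  proof (rule ccontr)
    assume "\<not> vc.independent (Psi H w ` C)"
    then obtain a where a: "a \<in> Psi H w ` C" "a \<in> vc.span (Psi H w ` C - {a})"
      unfolding vc.dependent_def by blast
    have "insert a (Psi H w ` C - {a}) = Psi H w ` C" using a(1) by blast
    then have "vc.span (Psi H w ` C - {a}) = vc.span (Psi H w ` C)"
      using vc.span_redundant[OF a(2)] by simp
    then have "bs \<subseteq> vc.span (Psi H w ` C - {a})" using bsC by simp
    then have "g \<le> card (Psi H w ` C - {a})"
      using vc.independent_span_bound[OF _ bi] finPC bc by simp
    moreover have "card (Psi H w ` C - {a}) = card (Psi H w ` C) - 1" using a(1) finPC by simp
    moreover have "card (Psi H w ` C) \<ge> 1" using a(1) finPC by (metis One_nat_def Suc_leI card_gt_0_iff empty_iff)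
    ultimately show False using gle cPC cC by linarith
  qed
  obtain k c where kc: "k \<in> vf.span K" "c \<in> vf.span C" "q = k + c" using split[OF q] by blast
  have "Psi H w c = 0" using q0 kc PsiK[OF kc(1)] by (simp add: Psi_add)
  then have "c = 0" using vfc.linear_indep_image_lemma[OF Psi_linear finC indPC injC kc(2)] by simp
  then show ?thesis using kc pairK by simp
qed

lemma Psi_diff: "Psi H w (\<lambda>h. x h - y h) = Psi H w x - Psi H w y"
  unfolding Psi_def by (simp add: of_rat_diff left_diff_distrib sum_subtractf)

lemma pairing_diff: "pairing H f (\<lambda>h. x h - y h) = pairing H f x - pairing H f y"
  unfolding pairing_def by (simp add: left_diff_distrib sum_subtractf)

lemma realize:
  fixes H :: "'h set" and vt :: "'h \<Rightarrow> 'v" and V :: "'v set" and w :: "'h \<Rightarrow> complex"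
    and f :: "'h \<Rightarrow> rat" and bs :: "complex set"
  assumes G: "graph_ok H V \<iota> vt" and v0: "v0 \<in> V"
    and genus: "card H + 2 = 2 * g + 2 * card V"
    and cw: "circ H \<iota> vt w" and cf: "circ H \<iota> vt f"
    and bi: "vc.independent bs" and bc: "card bs = g" and bI: "bs \<subseteq> Psi H w ` VH H"
    and FV: "F \<subseteq> Psi H w ` VH H"
  shows "\<exists>\<phi>. Q_linear_functional F \<phi> \<and> (\<forall>h\<in>H. \<phi> (w h) = f h)"
proof -
  have fin: "finite H" using graph_okD[OF G] by auto
  have wd: "pairing H f q1 = pairing H f q2" if "q1 \<in> VH H" "q2 \<in> VH H" "Psi H w q1 = Psi H w q2" for q1 q2
  proof -
    have "(\<lambda>h. q1 h - q2 h) \<in> VH H" using that by (auto simp: VH_def)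
    moreover have "Psi H w (\<lambda>h. q1 h - q2 h) = 0" using that by (simp add: Psi_diff)
    ultimately have "pairing H f (\<lambda>h. q1 h - q2 h) = 0"
      using core[OF G v0 genus cw cf bi bc bI] by blast
    then show ?thesis by (simp add: pairing_diff)
  qed
  define \<phi> where "\<phi> x = pairing H f (SOME q. q \<in> VH H \<and> Psi H w q = x)" for x
  have phi: "\<phi> (Psi H w q) = pairing H f q" if q: "q \<in> VH H" for q
  proof -
    have "\<exists>q'. q' \<in> VH H \<and> Psi H w q' = Psi H w q" using q by blast
    then have "(SOME q'. q' \<in> VH H \<and> Psi H w q' = Psi H w q) \<in> VH H \<and>
        Psi H w (SOME q'. q' \<in> VH H \<and> Psi H w q' = Psi H w q) = Psi H w q" by (rule someI_ex)
    then show ?thesis unfolding \<phi>_def using wd q by blast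
  qed
  have lin: "Q_linear_functional F \<phi>"
    unfolding Q_linear_functional_def
  proof (intro conjI ballI allI impI)
    fix x y assume x: "x \<in> F" and y: "y \<in> F"
    obtain qx where qx: "qx \<in> VH H" "x = Psi H w qx" using x FV by blast
    obtain qy where qy: "qy \<in> VH H" "y = Psi H w qy" using y FV by blast
    have s: "qx + qy \<in> VH H" using qx qy by (auto simp: VH_def)
    have "\<phi> (x + y) = \<phi> (Psi H w (qx + qy))" using qx qy by (simp add: Psi_add)
    also have "\<dots> = pairing H f (qx + qy)" using phi[OF s] .
    also have "\<dots> = \<phi> x + \<phi> y" using phi qx qy by (simp add: pairing_add)
    finally show "\<phi> (x + y) = \<phi> x + \<phi> y" .
  next
    fix c x assume x: "x \<in> F"
    obtain qx where qx: "qx \<in> VH H" "x = Psi H w qx" using x FV by blast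
    have s: "(\<lambda>h. c * qx h) \<in> VH H" using qx by (auto simp: VH_def)
    have "\<phi> (of_rat c * x) = \<phi> (Psi H w (\<lambda>h. c * qx h))" using qx by (simp add: Psi_scale)
    also have "\<dots> = pairing H f (\<lambda>h. c * qx h)" using phi[OF s] .
    also have "\<dots> = c * \<phi> x" using phi qx by (simp add: pairing_scale)
    finally show "\<phi> (of_rat c * x) = c * \<phi> x" .
  qed
  have "\<forall>h\<in>H. \<phi> (w h) = f h"
  proof
    fix h assume h: "h \<in> H"
    have "\<phi> (w h) = \<phi> (Psi H w (delta h))" using Psi_delta[OF fin h] by simp
    also have "\<dots> = f h" using phi[OF delta_VH[OF h]] pairing_delta[OF fin h] by simp
    finally show "\<phi> (w h) = f h" .
  qed
  then show ?thesis using lin by blast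
qed

lemma wsc_facts:
  assumes W: "weighted_stable_curve g I V H \<iota> vt w"
  shows "graph_ok H V \<iota> vt" "circ H \<iota> vt w" "V \<noteq> {}" "card H + 2 = 2 * g + 2 * card V"
    "I = {(\<Sum>h\<in>H. of_int (k h) * w h) | k :: 'h \<Rightarrow> int. True}"
proof -
  have W': "finite V" "finite H" "V \<noteq> {}" "\<forall>h\<in>H. \<iota> h \<in> H \<and> \<iota> h \<noteq> h \<and> \<iota> (\<iota> h) = h"
    "\<forall>h\<in>H. vt h \<in> V" "\<forall>x\<in>V. card {h\<in>H. vt h = x} \<ge> 3"
    "\<forall>x\<in>V. \<forall>y\<in>V. (x, y) \<in> {(vt h, vt (\<iota> h)) | h. h \<in> H}\<^sup>*"
    "card H + 2 = 2 * g + 2 * card V" "\<forall>h\<in>H. w (\<iota> h) = - w h"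
    "\<forall>x\<in>V. (\<Sum>h\<in>{h\<in>H. vt h = x}. w h) = 0"
    "{(\<Sum>h\<in>H. of_int (k h) * w h) | k :: 'h \<Rightarrow> int. True} = I"
    using W unfolding weighted_stable_curve_def by auto
  show "graph_ok H V \<iota> vt" unfolding graph_ok_def invol_def Eg_def using W' by blast
  show "circ H \<iota> vt w" unfolding circ_def div_at_def
  proof (intro conjI allI)
    show "\<forall>h\<in>H. w (\<iota> h) = - w h" using W' by blast
    fix x
    show "(\<Sum>h\<in>{h\<in>H. vt h = x}. w h) = 0"
    proof (cases "x \<in> V")
      case True then show ?thesis using W' by blast
    next
      case False
      then have e: "{h\<in>H. vt h = x} = {}" using W' by auto
      show ?thesis by (simp only: e sum.empty)
    qed
  qed
  show "V \<noteq> {}" "card H + 2 = 2 * g + 2 * card V" using W' by auto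
  show "I = {(\<Sum>h\<in>H. of_int (k h) * w h) | k :: 'h \<Rightarrow> int. True}" using W' by simp
qed

lemma indep_inj:
  assumes "Q_indep b g"
  shows "inj_on b {..<g}"
proof (rule inj_onI)
  fix i j assume i: "i \<in> {..<g}" and j: "j \<in> {..<g}" and e: "b i = b j"
  show "i = j"
  proof (rule ccontr)
    assume ne: "i \<noteq> j"
    define q where "q k = (if k = i then 1 else if k = j then -1 else (0::rat))" for k
    have "(\<Sum>k<g. of_rat (q k) * b k) = (\<Sum>k<g. (if k = i then b k else 0) - (if k = j then b k else 0))"
      by (rule sum.cong) (use ne in \<open>auto simp: q_def\<close>)
    also have "\<dots> = b i - b j" using i j by (simp add: sum_subtractf)
    also have "\<dots> = 0" using e by simp
    finally have "q i = 0" using assms i unfolding Q_indep_def by blast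
    then show False by (simp add: q_def)
  qed
qed

lemma indep_vc:
  assumes "Q_indep b g"
  shows "vc.independent (b ` {..<g})"
proof (rule vc.independent_if_scalars_zero)
  show "finite (b ` {..<g})" by simp
  fix c :: "complex \<Rightarrow> rat" and x
  assume s: "(\<Sum>x\<in>b ` {..<g}. of_rat (c x) * x) = 0" and x: "x \<in> b ` {..<g}"
  have z: "(\<Sum>k<g. of_rat (c (b k)) * b k) = 0"
    using s sum.reindex[OF indep_inj[OF assms], of "\<lambda>x. of_rat (c x) * x"] by simp
  have "\<forall>k<g. c (b k) = 0" using spec[OF assms[unfolded Q_indep_def], of "\<lambda>k. c (b k)"] z by simp
  then show "c x = 0" using x by auto
qed

lemma Qspan_sub: "Q_span b g \<subseteq> vc.span (b ` {..<g})"
proof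
  fix x assume "x \<in> Q_span b g"
  then obtain q where q: "x = (\<Sum>i<g. of_rat (q i) * b i)" unfolding Q_span_def by blast
  have "(\<Sum>i<g. of_rat (q i) * b i) \<in> vc.span (b ` {..<g})"
    by (intro vc.span_sum) (auto intro: vc.span_scale vc.span_base)
  then show "x \<in> vc.span (b ` {..<g})" using q by simp
qed


lemma lattice_bs:
  fixes w :: "'h \<Rightarrow> complex"
  assumes L: "is_lattice F g I" and Iw: "I = {(\<Sum>h\<in>H. of_int (k h) * w h) | k :: 'h \<Rightarrow> int. True}"
    and fin: "finite H"
  shows "\<exists>bs. bs \<subseteq> F \<and> vc.independent bs \<and> card bs = g \<and> bs \<subseteq> Psi H w ` VH H"
proof -
  obtain b' where b'F: "\<forall>i<g. b' i \<in> F" and bi: "Q_indep b' g" and IZ: "I = Z_span b' g"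
    using L unfolding is_lattice_def by blast
  have sub: "b' ` {..<g} \<subseteq> Psi H w ` VH H"
  proof
    fix x assume "x \<in> b' ` {..<g}"
    then obtain i where i: "i < g" "x = b' i" by auto
    define k where "k j = (if j = i then 1 else (0::int))" for j
    have "(\<Sum>j<g. of_int (k j) * b' j) = (\<Sum>j<g. if j = i then b' j else 0)"
      by (rule sum.cong) (auto simp: k_def)
    also have "\<dots> = b' i" using i by simp
    finally have calc: "(\<Sum>j<g. of_int (k j) * b' j) = b' i" .
    have "\<exists>kk. b' i = (\<Sum>j<g. of_int (kk j) * b' j)" using calc by (intro exI[of _ k]) simp
    then have "b' i \<in> Z_span b' g" unfolding Z_span_def by simp
    then have "b' i \<in> I" using IZ by simp
    then obtain kk :: "'h \<Rightarrow> int" where kk: "b' i = (\<Sum>h\<in>H. of_int (kk h) * w h)" using Iw by blast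
    define q where "q x = (if x \<in> H then (of_int (kk x) :: rat) else 0)" for x
    have qV: "q \<in> VH H" by (simp add: VH_def q_def)
    have "Psi H w q = (\<Sum>h\<in>H. of_int (kk h) * w h)"
      unfolding Psi_def by (rule sum.cong) (auto simp: q_def)
    then have "x = Psi H w q" using kk i by simp
    then show "x \<in> Psi H w ` VH H" using qV by blast
  qed
  show ?thesis
    using b'F indep_vc[OF bi] card_image[OF indep_inj[OF bi]] sub by (intro exI[of _ "b' ` {..<g}"]) auto
qed

lemma F_sub:
  fixes w :: "'h \<Rightarrow> complex"
  assumes N: "number_field_of_degree F g" and bsF: "bs \<subseteq> F" and bi: "vc.independent bs"
    and bc: "card bs = g" and bI: "bs \<subseteq> Psi H w ` VH H"
  shows "F \<subseteq> Psi H w ` VH H"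
proof -
  obtain b where bq: "Q_indep b g" and Fs: "Q_span b g = F"
    using N unfolding number_field_of_degree_def by blast
  let ?T = "b ` {..<g}"
  have FT: "F \<subseteq> vc.span ?T" using Qspan_sub[of b g] Fs by simp
  have finT: "finite ?T" by simp
  have cT: "card ?T \<le> g" using card_image_le[of "{..<g}" b] by simp
  have Tbs: "?T \<subseteq> vc.span bs"
  proof
    fix t assume tT: "t \<in> ?T"
    show "t \<in> vc.span bs"
    proof (rule ccontr)
      assume t: "t \<notin> vc.span bs"
      have ind: "vc.independent (insert t bs)" by (rule vc.independent_insertI[OF t bi])
      have s1: "t \<in> vc.span ?T" using tT by (rule vc.span_base)
      have s2: "bs \<subseteq> vc.span ?T" using bsF FT by (rule subset_trans)
      have sub: "insert t bs \<subseteq> vc.span ?T" using s1 s2 by (simp only: insert_subset)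
      have bd: "finite (insert t bs) \<and> card (insert t bs) \<le> card ?T"
        by (rule vc.independent_span_bound[OF finT ind sub])
      have tn: "t \<notin> bs" using t vc.span_base by metis
      have fb: "finite bs" using bd by simp
      have "card (insert t bs) = Suc g" using tn fb bc by simp
      then show False using bd cT by simp
    qed
  qed
  have sT: "vc.span ?T \<subseteq> vc.span bs" by (rule vc.span_minimal[OF Tbs vc.subspace_span])
  have subsp: "vc.subspace (Psi H w ` VH H)"
    by (rule vfc.linear_subspace_image[OF Psi_linear VH_subspace])
  have sb: "vc.span bs \<subseteq> Psi H w ` VH H" by (rule vc.span_minimal[OF bI subsp])
  have "F \<subseteq> vc.span bs" using FT sT by (rule subset_trans)
  then show ?thesis using sb by (rule subset_trans)
qed

theorem theorem3p1:
  fixes F I :: "complex set" and g n :: nat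
    and V :: "'v set" and H :: "'h set" and \<iota> :: "'h \<Rightarrow> 'h" and vt :: "'h \<Rightarrow> 'v"
    and w :: "'h \<Rightarrow> complex" and r :: "nat \<Rightarrow> complex"
  assumes "number_field_of_degree F g"
    and "totally_real F"
    and "is_lattice F g I"
    and "weighted_stable_curve g I V H \<iota> vt w"
    and "\<forall>i<n. r i \<in> w ` H \<and> r i \<noteq> 0"
    and "\<forall>i<n. \<forall>j<n. i \<noteq> j \<longrightarrow> r i \<noteq> r j \<and> r i \<noteq> - r j"
    and "\<forall>h\<in>H. w h \<noteq> 0 \<longrightarrow> (\<exists>i<n. w h = r i \<or> w h = - r i)"
  shows "Q_lin_indep (\<lambda>i. Q_tensor F (r i) (r i)) n"
proof -
  note N = assms(1) and L = assms(3) and W = assms(4) and rH = assms(5) and rd = assms(6)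
  have G: "graph_ok H V \<iota> vt" and cw: "circ H \<iota> vt w" and Vne: "V \<noteq> {}"
    and genus: "card H + 2 = 2 * g + 2 * card V"
    and Iw: "I = {(\<Sum>h\<in>H. of_int (k h) * w h) | k :: 'h \<Rightarrow> int. True}"
    using wsc_facts[OF W] by auto
  have fin: "finite H" and inv: "invol H \<iota>" using graph_okD[OF G] by auto
  obtain v0 where v0: "v0 \<in> V" using Vne by blast
  obtain bs where bsF: "bs \<subseteq> F" and bi: "vc.independent bs" and bc: "card bs = g"
    and bI: "bs \<subseteq> Psi H w ` VH H"
    using lattice_bs[OF L Iw fin] by blast
  have FV: "F \<subseteq> Psi H w ` VH H" using F_sub[OF N bsF bi bc bI] .
  have real: "\<exists>\<phi>. Q_linear_functional F \<phi> \<and> (\<forall>h\<in>H. \<phi> (w h) = f h)" if "circ H \<iota> vt f" for f :: "'h \<Rightarrow> rat"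
    using realize[OF G v0 genus cw that bi bc bI FV] .
  show ?thesis
    unfolding Q_lin_indep_def
  proof (intro allI impI)
    fix c :: "nat \<Rightarrow> rat" and i
    assume eq: "(\<lambda>p. \<Sum>j<n. c j * Q_tensor F (r j) (r j) p) = (\<lambda>p. 0)" and i: "i < n"
    have "r i \<in> w ` H" using rH i by simp
    then obtain h0 where h0': "h0 \<in> H" "r i = w h0" by blast
    then have h0: "h0 \<in> H" "w h0 = r i" by simp_all
    have w0: "w h0 \<noteq> 0" using rH i h0 by simp
    obtain f1 f2 :: "'h \<Rightarrow> rat" where c1: "circ H \<iota> vt f1" and c2: "circ H \<iota> vt f2"
      and f1: "f1 h0 \<noteq> 0" and f2: "f2 h0 \<noteq> 0"
      and pr: "\<forall>h\<in>H. w h \<noteq> w h0 \<and> w h \<noteq> - w h0 \<longrightarrow> f1 h * f2 h = 0"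
      using key_flows[OF fin inv cw h0(1) w0] by blast
    obtain \<phi>1 where p1: "Q_linear_functional F \<phi>1" "\<forall>h\<in>H. \<phi>1 (w h) = f1 h" using real[OF c1] by blast
    obtain \<phi>2 where p2: "Q_linear_functional F \<phi>2" "\<forall>h\<in>H. \<phi>2 (w h) = f2 h" using real[OF c2] by blast
    have "(\<Sum>j<n. c j * Q_tensor F (r j) (r j) (\<phi>1, \<phi>2)) = 0" using fun_cong[OF eq, of "(\<phi>1, \<phi>2)"] by simp
    moreover have "(\<Sum>j<n. c j * Q_tensor F (r j) (r j) (\<phi>1, \<phi>2)) = (\<Sum>j<n. if j = i then c i * (f1 h0 * f2 h0) else 0)"
    proof (rule sum.cong[OF refl])
      fix j assume j: "j \<in> {..<n}"
      have "r j \<in> w ` H" using rH j by simp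
      then obtain hj where hj': "hj \<in> H" "r j = w hj" by blast
      then have hj: "hj \<in> H" "w hj = r j" by simp_all
      have qt: "Q_tensor F (r j) (r j) (\<phi>1, \<phi>2) = f1 hj * f2 hj"
        using p1 p2 hj unfolding Q_tensor_def by (simp add: hj(2)[symmetric])
      show "c j * Q_tensor F (r j) (r j) (\<phi>1, \<phi>2) = (if j = i then c i * (f1 h0 * f2 h0) else 0)"
      proof (cases "j = i")
        case True
        have "Q_tensor F (r j) (r j) (\<phi>1, \<phi>2) = f1 h0 * f2 h0"
          using p1 p2 h0 True unfolding Q_tensor_def by (simp add: h0(2)[symmetric])
        then show ?thesis using True by simp
      next
        case False
        have "r j \<noteq> r i \<and> r j \<noteq> - r i" using rd j i False by simp
        then have "w hj \<noteq> w h0 \<and> w hj \<noteq> - w h0" using hj h0 by simp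
        then have "f1 hj * f2 hj = 0" using pr hj by blast
        then show ?thesis using qt False by simp
      qed
    qed
    moreover have "(\<Sum>j<n. if j = i then c i * (f1 h0 * f2 h0) else 0) = c i * (f1 h0 * f2 h0)"
      using i by simp
    ultimately show "c i = 0" using f1 f2 by simp
  qed
qed

end
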